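(* For every positive integer $n$: (i) $b^{2}_{3,4}(6n+4)\equiv 0\pmod 2$; (ii) $b^{2}_{3,4}(6n+2)\equiv b^{3}_{3}(n)\pmod 2$; (iii) $b^{2}_{3,4}(12n+6)\equiv 0\pmod 2$; (iv) $b^{2}_{3,4}(12n)\equiv p(n)\pmod 2$.
   Context: For integers $r\ge1$ write $f_r=\prod_{j\ge1}(1-q^{rj})$. $b^{2}_{3,4}(n)$ is the number of $2$-colored partitions of $n$ into parts not divisible by $3$ or $4$, i.e. $\sum_{n\ge0}b^2_{3,4}(n)q^n=\dfrac{f_3^2f_4^2}{f_1^2f_{12}^2}$. $b^{3}_{3}(n)$ is the number of $3$-colored partitions of $n$ into parts not divisible by $3$, i.e. $\sum_{n\ge0}b^3_3(n)q^n=\dfrac{f_3^3}{f_1^3}$. $p(n)$ is the ordinary partition function, $\sum_{n\ge0}p(n)q^n=1/f_1$. *)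

theory Defs
  imports Main "HOL-Library.Multiset" "HOL-Number_Theory.Cong"
begin

definition colored_partitions :: "nat \<Rightarrow> (nat \<Rightarrow> bool) \<Rightarrow> nat \<Rightarrow> (nat \<times> nat) multiset set" where
  "colored_partitions k P n =
     {M. (\<forall>x\<in>#M. 0 < fst x \<and> P (fst x) \<and> snd x < k) \<and> sum_mset (image_mset fst M) = n}"

definition b2_34 :: "nat \<Rightarrow> nat" where
  "b2_34 n = card (colored_partitions 2 (\<lambda>a. \<not> 3 dvd a \<and> \<not> 4 dvd a) n)"

definition b3_3 :: "nat \<Rightarrow> nat" where
  "b3_3 n = card (colored_partitions 3 (\<lambda>a. \<not> 3 dvd a) n)"

definition part_count :: "nat \<Rightarrow> nat" where
  "part_count n = card (colored_partitions 1 (\<lambda>_. True) n)"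

end

theory Submission
  imports Defs "HOL-Computational_Algebra.Formal_Power_Series" "HOL-Library.Z2"
begin
unbundle fps_syntax

definition eqm :: "nat \<Rightarrow> 'a::comm_ring_1 fps \<Rightarrow> 'a fps \<Rightarrow> bool" where
  "eqm N f g \<longleftrightarrow> (\<forall>i<N. f $ i = g $ i)"

lemma eqm_refl[simp]: "eqm N f f" by (simp add: eqm_def)
lemma eqm_sym: "eqm N f g \<Longrightarrow> eqm N g f" by (simp add: eqm_def)
lemma eqm_trans: "eqm N f g \<Longrightarrow> eqm N g h \<Longrightarrow> eqm N f h" by (simp add: eqm_def)
lemma eqm_mono: "eqm N f g \<Longrightarrow> M \<le> N \<Longrightarrow> eqm M f g" by (simp add: eqm_def)
lemma eqm_add: "eqm N f g \<Longrightarrow> eqm N h k \<Longrightarrow> eqm N (f + h) (g + k)" by (simp add: eqm_def)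
lemma eqm_diff: "eqm N f g \<Longrightarrow> eqm N h k \<Longrightarrow> eqm N (f - h) (g - k)" by (simp add: eqm_def)
lemma eqm_mult: "eqm N f g \<Longrightarrow> eqm N h k \<Longrightarrow> eqm N (f * h) (g * k)"
  unfolding eqm_def fps_mult_nth by (auto intro!: sum.cong)

lemma eqm_prod: "finite S \<Longrightarrow> (\<And>x. x \<in> S \<Longrightarrow> eqm N (f x) (g x)) \<Longrightarrow> eqm N (prod f S) (prod g S)"
  by (induction S rule: finite_induct) (auto intro: eqm_mult)

lemma eqm_sum: "(\<And>x. x \<in> S \<Longrightarrow> eqm N (f x) (g x)) \<Longrightarrow> eqm N (sum f S) (sum g S)"
  by (induction S rule: infinite_finite_induct) (auto intro: eqm_add)

lemma eqm_power: "eqm N f g \<Longrightarrow> eqm N (f ^ k) (g ^ k)"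
  by (induction k) (auto intro: eqm_mult)

lemma eqm_Xpow_mult: "N \<le> a \<Longrightarrow> eqm N (fps_X ^ a * h) 0"
  by (simp add: eqm_def fps_X_power_mult_nth)

lemma eqm_one_minus_Xpow: "N \<le> a \<Longrightarrow> eqm N (1 - fps_X ^ a) 1"
  using eqm_diff[OF eqm_refl[of N 1] eqm_Xpow_mult[of N a 1]] by simp

lemma eqm_inverse:
  fixes f g :: "'a::field fps"
  assumes "eqm N f g" "f $ 0 \<noteq> 0"
  shows "eqm N (inverse f) (inverse g)"
proof (cases "N = 0")
  case True then show ?thesis by (simp add: eqm_def)
next
  case False
  then have g0: "g $ 0 \<noteq> 0" using assms by (auto simp: eqm_def)
  have "eqm N (inverse f * g) (inverse f * f)"
    by (rule eqm_mult[OF eqm_refl eqm_sym[OF assms(1)]])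
  then have "eqm N (inverse g * (inverse f * g)) (inverse g * (inverse f * f))"
    by (rule eqm_mult[OF eqm_refl])
  moreover have "inverse g * (inverse f * g) = inverse f"
    using g0 by (metis inverse_mult_eq_1 mult.commute mult.left_commute mult.right_neutral)
  moreover have "inverse g * (inverse f * f) = inverse g"
    using assms(2) by (simp add: inverse_mult_eq_1)
  ultimately show ?thesis by (simp add: eqm_sym)
qed

definition dil :: "nat \<Rightarrow> 'a::comm_ring_1 fps \<Rightarrow> 'a fps" where
  "dil r f = f oo fps_X ^ r"

lemma dil_nth:
  assumes "r > 0"
  shows "dil r f $ i = (if r dvd i then f $ (i div r) else (0::'a::idom))"
proof -
  have "dil r f $ i = (\<Sum>j = 0..i. f $ j * (if i = r * j then 1 else 0))"
    unfolding dil_def fps_compose_nth by (simp add: power_mult[symmetric])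
  also have "\<dots> = (\<Sum>j \<in> (if r dvd i then {i div r} else {}). f $ j)"
  proof (cases "r dvd i")
    case True
    then obtain m where m: "i = r * m" by auto
    have "m \<le> i" using assms m by simp
    then have "(\<Sum>j = 0..i. f $ j * (if i = r * j then 1 else 0)) = (\<Sum>j \<in> {m}. f $ j)"
      by (intro sum.mono_neutral_cong_right) (use assms m in auto)
    then show ?thesis using True m assms by simp
  next
    case False
    then show ?thesis by (auto intro!: sum.neutral)
  qed
  finally show ?thesis by auto
qed


definition G :: "nat \<Rightarrow> 'a::comm_ring_1 fps" where
  "G d = Abs_fps (\<lambda>i. if d dvd i then 1 else 0)"

definition MS :: "'t set \<Rightarrow> ('t \<Rightarrow> nat) \<Rightarrow> nat \<Rightarrow> 't multiset set" where
  "MS T w n = {M. set_mset M \<subseteq> T \<and> sum_mset (image_mset w M) = n}"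

lemma MS_empty: "MS {} w n = (if n = 0 then {{#}} else {})"
  by (auto simp: MS_def)

lemma MS_insert:
  assumes "t \<notin> T" "w t > 0"
  shows "MS (insert t T) w n =
    (\<Union>m \<in> {0..n div w t}. (\<lambda>M. M + replicate_mset m t) ` MS T w (n - m * w t))"
proof (intro equalityI subsetI)
  fix M assume M: "M \<in> MS (insert t T) w n"
  define m where "m = count M t"
  define M' where "M' = filter_mset (\<lambda>x. x \<noteq> t) M"
  have split: "M = M' + replicate_mset m t"
    unfolding M'_def m_def
    by (metis filter_eq_replicate_mset multiset_partition union_commute)
  have sM': "set_mset M' \<subseteq> T" using M unfolding M'_def MS_def by auto
  have "sum_mset (image_mset w M) = sum_mset (image_mset w M') + m * w t"
    by (subst split) simp
  with M have sum: "sum_mset (image_mset w M') + m * w t = n" by (simp add: MS_def)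
  then have "m * w t \<le> n" by simp
  then have "m \<le> n div w t" using assms(2) by (simp add: less_eq_div_iff_mult_less_eq)
  moreover have "M' \<in> MS T w (n - m * w t)" using sM' sum by (auto simp: MS_def)
  ultimately show "M \<in> (\<Union>m \<in> {0..n div w t}. (\<lambda>M. M + replicate_mset m t) ` MS T w (n - m * w t))"
    using split by auto
next
  fix M assume "M \<in> (\<Union>m \<in> {0..n div w t}. (\<lambda>M. M + replicate_mset m t) ` MS T w (n - m * w t))"
  then obtain m M' where m: "m \<le> n div w t" and M': "M' \<in> MS T w (n - m * w t)"
    and MM: "M = M' + replicate_mset m t" by auto
  have "m * w t \<le> n" using m assms(2) by (simp add: less_eq_div_iff_mult_less_eq)
  then show "M \<in> MS (insert t T) w n" using M' MM by (auto simp: MS_def)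
qed

lemma G_nth: "G d $ i = (if d dvd i then 1 else 0)"
  by (simp add: G_def)

lemma MS_count:
  assumes "finite T" "\<forall>t\<in>T. w t > 0"
  shows "finite (MS T w n) \<and> of_nat (card (MS T w n)) = (\<Prod>t\<in>T. G (w t) :: 'a::comm_ring_1 fps) $ n"
  using assms
proof (induction T arbitrary: n rule: finite_induct)
  case empty
  then show ?case by (simp add: MS_empty)
next
  case (insert t T)
  let ?d = "w t"
  have d: "?d > 0" using insert by auto
  let ?A = "\<lambda>m. (\<lambda>M. M + replicate_mset m t) ` MS T w (n - m * ?d)"
  have eq: "MS (insert t T) w n = (\<Union>m \<in> {0..n div ?d}. ?A m)"
    using MS_insert[of t T w n] insert(2) d by simp
  have fin: "\<And>m. finite (?A m)" using insert by auto
  have disj: "\<forall>i\<in>{0..n div ?d}. \<forall>j\<in>{0..n div ?d}. i \<noteq> j \<longrightarrow> ?A i \<inter> ?A j = {}"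
  proof (intro ballI impI)
    fix i j :: nat assume "i \<in> {0..n div ?d}" "j \<in> {0..n div ?d}" "i \<noteq> j"
    show "?A i \<inter> ?A j = {}"
    proof (rule ccontr)
      assume "?A i \<inter> ?A j \<noteq> {}"
      then obtain M1 M2 where M1: "M1 \<in> MS T w (n - i * ?d)" and M2: "M2 \<in> MS T w (n - j * ?d)"
        and e: "M1 + replicate_mset i t = M2 + replicate_mset j t" by auto
      have "t \<notin># M1" "t \<notin># M2" using M1 M2 insert(2) by (auto simp: MS_def)
      then have "count (M1 + replicate_mset i t) t = i" "count (M2 + replicate_mset j t) t = j"
        by (auto simp: count_eq_zero_iff)
      with e \<open>i \<noteq> j\<close> show False by simp
    qed
  qed
  have card_eq: "card (MS (insert t T) w n) = (\<Sum>m = 0..n div ?d. card (?A m))"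
    unfolding eq by (rule card_UN_disjoint) (use fin disj in auto)
  have cardA: "card (?A m) = card (MS T w (n - m * ?d))" for m
    by (rule card_image) (auto simp: inj_on_def)
  have "(\<Prod>t\<in>insert t T. G (w t) :: 'a fps) $ n = (G ?d * (\<Prod>t\<in>T. G (w t))) $ n"
    using insert by simp
  also have "\<dots> = (\<Sum>i=0..n. (if ?d dvd i then 1 else 0) * (\<Prod>t\<in>T. G (w t) :: 'a fps) $ (n - i))"
    by (simp add: fps_mult_nth G_nth)
  also have "\<dots> = (\<Sum>i=0..n. if ?d dvd i then (\<Prod>t\<in>T. G (w t) :: 'a fps) $ (n - i) else 0)"
    by (intro sum.cong) auto
  also have "\<dots> = (\<Sum>i\<in>{i\<in>{0..n}. ?d dvd i}. (\<Prod>t\<in>T. G (w t) :: 'a fps) $ (n - i))"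
    by (rule sum.inter_filter[symmetric]) simp
  also have "{i\<in>{0..n}. ?d dvd i} = (\<lambda>m. m * ?d) ` {0..n div ?d}"
  proof (intro equalityI subsetI)
    fix i assume "i \<in> {i\<in>{0..n}. ?d dvd i}"
    then have "?d dvd i" "i \<le> n" by auto
    then obtain m where "i = m * ?d" by (metis dvd_def mult.commute)
    with \<open>i \<le> n\<close> show "i \<in> (\<lambda>m. m * ?d) ` {0..n div ?d}" using d
      by (auto simp: less_eq_div_iff_mult_less_eq)
  next
    fix i assume "i \<in> (\<lambda>m. m * ?d) ` {0..n div ?d}"
    then show "i \<in> {i\<in>{0..n}. ?d dvd i}" using d
      by (auto simp: less_eq_div_iff_mult_less_eq)
  qed
  also have "(\<Sum>i\<in>(\<lambda>m. m * ?d) ` {0..n div ?d}. (\<Prod>t\<in>T. G (w t) :: 'a fps) $ (n - i))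
      = (\<Sum>m=0..n div ?d. (\<Prod>t\<in>T. G (w t) :: 'a fps) $ (n - m * ?d))"
    by (rule sum.reindex_cong[of "\<lambda>m. m * ?d"]) (use d in \<open>auto simp: inj_on_def\<close>)
  also have "\<dots> = (\<Sum>m=0..n div ?d. of_nat (card (MS T w (n - m * ?d))))"
    using insert by simp
  also have "\<dots> = of_nat (card (MS (insert t T) w n))"
    by (simp add: card_eq cardA)
  finally have "of_nat (card (MS (insert t T) w n)) = (\<Prod>t\<in>insert t T. G (w t) :: 'a fps) $ n" ..
  moreover have "finite (MS (insert t T) w n)" unfolding eq using fin by auto
  ultimately show ?case by simp
qed


fun trin :: "nat \<Rightarrow> nat" where
  "trin 0 = 0"
| "trin (Suc j) = trin j + j"

lemma trin_int: "2 * int (trin x) = int x * int x - int x"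
  by (induction x) (auto simp: algebra_simps)

fun gb :: "'a::comm_ring_1 \<Rightarrow> nat \<Rightarrow> nat \<Rightarrow> 'a" where
  "gb q 0 j = (if j = 0 then 1 else 0)"
| "gb q (Suc N) j = (if j = 0 then 1 else gb q N j + q ^ (Suc N - j) * gb q N (j - 1))"

lemma gb_zero: "N < j \<Longrightarrow> gb q N j = 0"
  by (induction N arbitrary: j) auto

lemma gb_0[simp]: "gb q N 0 = 1"
  by (cases N) auto

lemma gb_diag: "gb q N N = 1"
  by (induction N) (auto simp: gb_zero)

lemma qbin:
  fixes q w z :: "'a::comm_ring_1"
  shows "(\<Prod>i<N. w + z * q ^ i) = (\<Sum>j\<le>N. gb q N j * q ^ trin j * z ^ j * w ^ (N - j))"
proof (induction N)
  case 0
  then show ?case by simp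
next
  case (Suc N)
  let ?t = "\<lambda>j. gb q N j * q ^ trin j * z ^ j * w ^ (N - j)"
  have "(\<Prod>i<Suc N. w + z * q ^ i) = (\<Sum>j\<le>N. ?t j) * (w + z * q ^ N)"
    using Suc by simp
  also have "\<dots> = (\<Sum>j\<le>N. ?t j * w) + (\<Sum>j\<le>N. ?t j * (z * q ^ N))"
    by (simp add: distrib_left sum_distrib_right)
  finally have L: "(\<Prod>i<Suc N. w + z * q ^ i) = (\<Sum>j\<le>N. ?t j * w) + (\<Sum>j\<le>N. ?t j * (z * q ^ N))" .
  let ?u = "\<lambda>j. gb q (Suc N) j * q ^ trin j * z ^ j * w ^ (Suc N - j)"
  have u: "?u j = gb q N j * q ^ trin j * z ^ j * w ^ (Suc N - j) +
     (if j = 0 then 0 else q ^ (Suc N - j) * gb q N (j - 1) * q ^ trin j * z ^ j * w ^ (Suc N - j))" for j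
    by (cases j) (auto simp: algebra_simps gb_zero)
  have "(\<Sum>j\<le>Suc N. ?u j) = (\<Sum>j\<le>Suc N. gb q N j * q ^ trin j * z ^ j * w ^ (Suc N - j)) +
     (\<Sum>j\<le>Suc N. (if j = 0 then 0 else q ^ (Suc N - j) * gb q N (j - 1) * q ^ trin j * z ^ j * w ^ (Suc N - j)))"
    unfolding u by (simp add: sum.distrib)
  also have "(\<Sum>j\<le>Suc N. gb q N j * q ^ trin j * z ^ j * w ^ (Suc N - j)) = (\<Sum>j\<le>N. ?t j * w)"
    by (simp add: sum.atMost_Suc gb_zero Suc_diff_le algebra_simps)
  also have "(\<Sum>j\<le>Suc N. (if j = 0 then 0 else q ^ (Suc N - j) * gb q N (j - 1) * q ^ trin j * z ^ j * w ^ (Suc N - j)))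
     = (\<Sum>j\<le>N. q ^ (N - j) * gb q N j * q ^ trin (Suc j) * z ^ Suc j * w ^ (N - j))"
    by (subst sum.atMost_Suc_shift) (simp del: trin.simps)
  also have "\<dots> = (\<Sum>j\<le>N. ?t j * (z * q ^ N))"
  proof (rule sum.cong[OF refl])
    fix j assume "j \<in> {..N}"
    then have "N - j + (trin j + j) = trin j + N" by auto
    then have "q ^ (N - j) * q ^ trin (Suc j) = q ^ trin j * q ^ N"
      by (simp add: power_add[symmetric] add.commute)
    then show "q ^ (N - j) * gb q N j * q ^ trin (Suc j) * z ^ Suc j * w ^ (N - j) = ?t j * (z * q ^ N)"
      by (simp add: algebra_simps)
  qed
  finally show ?case using L by simp
qed

definition qpoch :: "'a::comm_ring_1 \<Rightarrow> nat \<Rightarrow> 'a" where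
  "qpoch q m = (\<Prod>i\<in>{1..m}. 1 - q ^ i)"

lemma qpoch_0[simp]: "qpoch q 0 = 1" by (simp add: qpoch_def)
lemma qpoch_Suc: "qpoch q (Suc m) = qpoch q m * (1 - q ^ Suc m)"
  by (simp add: qpoch_def mult.commute)

lemma gb_qpoch: "j \<le> N \<Longrightarrow> qpoch q j * qpoch q (N - j) * gb q N j = qpoch q N"
proof (induction N arbitrary: j)
  case 0
  then show ?case by simp
next
  case (Suc N)
  show ?case
  proof (cases "j = 0")
    case True then show ?thesis by simp
  next
    case False
    show ?thesis
    proof (cases "j = Suc N")
      case True
      then show ?thesis by (simp add: gb_zero gb_diag)
    next
      case False
      with \<open>j \<noteq> 0\<close> Suc.prems obtain i where j: "j = Suc i" "i < N" by (cases j) auto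
      have IH1: "qpoch q (Suc i) * qpoch q (N - Suc i) * gb q N (Suc i) = qpoch q N"
        using Suc.IH[of "Suc i"] j by simp
      have IH2: "qpoch q i * qpoch q (N - i) * gb q N i = qpoch q N"
        using Suc.IH[of i] j by simp
      have e1: "Suc N - Suc i = Suc (N - Suc i)" using j by simp
      have e2: "N - i = Suc (N - Suc i)" using j by simp
      have "qpoch q (Suc i) * qpoch q (Suc N - Suc i) * gb q (Suc N) (Suc i)
         = qpoch q (Suc i) * qpoch q (Suc (N - Suc i)) * gb q N (Suc i)
           + q ^ Suc (N - Suc i) * (qpoch q (Suc i) * qpoch q (Suc (N - Suc i)) * gb q N i)"
        by (simp add: e1 e2 algebra_simps)
      also have "qpoch q (Suc i) * qpoch q (Suc (N - Suc i)) * gb q N (Suc i)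
         = (1 - q ^ Suc (N - Suc i)) * qpoch q N"
        by (simp only: qpoch_Suc[of q "N - Suc i"] IH1[symmetric]) (simp add: algebra_simps)
      also have "qpoch q (Suc i) * qpoch q (Suc (N - Suc i)) * gb q N i = (1 - q ^ Suc i) * qpoch q N"
        by (simp only: qpoch_Suc[of q i] e2[symmetric] IH2[symmetric]) (simp add: algebra_simps)
      also have "(1 - q ^ Suc (N - Suc i)) * qpoch q N + q ^ Suc (N - Suc i) * ((1 - q ^ Suc i) * qpoch q N)
          = qpoch q N * (1 - q ^ (Suc (N - Suc i) + Suc i))"
        by (simp add: power_add algebra_simps)
      also have "Suc (N - Suc i) + Suc i = Suc N" using j by simp
      finally show ?thesis using j by (simp add: qpoch_Suc)
    qed
  qed
qed


definition Te :: "nat \<Rightarrow> nat \<Rightarrow> nat" where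
  "Te n j = (if n \<le> j then trin (j - n + 1) else trin (n - j))"

lemma sum_diff_trin: "(\<Sum>m<n. n - m) = trin (Suc n)"
proof -
  have "(\<Sum>m<n. n - m) = (\<Sum>m<n. Suc m)"
    using sum.nat_diff_reindex[of "\<lambda>m. n - m" n] by simp
  also have "\<dots> = trin (Suc n)" by (induction n) auto
  finally show ?thesis .
qed

lemma exp_identity:
  assumes "j \<le> 2 * n"
  shows "trin j + j + n * (2 * n - j) = n * n + trin (Suc n) + Te n j"
proof -
  have h1: "2 * int (trin j) = int j * int j - int j" by (rule trin_int)
  have h2: "2 * int (trin (Suc n)) = (1 + int n) * (1 + int n) - (1 + int n)"
    using trin_int[of "Suc n"] by (simp only: of_nat_Suc)
  have "int (trin j + j + n * (2 * n - j)) = int (n * n + trin (Suc n) + Te n j)"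
  proof (cases "n \<le> j")
    case True
    then obtain k where k: "j = n + k" by (metis le_add_diff_inverse)
    have "k \<le> n" using assms k by simp
    then have e: "int (n * (2 * n - j)) = int n * (int n - int k)" using k by (simp add: of_nat_diff)
    have te: "Te n j = trin (Suc k)" using k by (simp add: Te_def del: trin.simps)
    have h3: "2 * int (trin (Suc k)) = (1 + int k) * (1 + int k) - (1 + int k)"
      using trin_int[of "Suc k"] by (simp only: of_nat_Suc)
    have jj: "int j = int n + int k" using k by simp
    show ?thesis unfolding of_nat_add e te using h1 h2 h3 jj
      by (simp only: of_nat_mult) algebra
  next
    case False
    then obtain k where k: "n = j + k" by (metis le_add_diff_inverse nat_le_linear)
    then have e: "int (n * (2 * n - j)) = int n * (int n + int k)" by (simp add: of_nat_diff)
    have te: "Te n j = trin k" using k False by (simp add: Te_def del: trin.simps)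
    have h3: "2 * int (trin k) = int k * int k - int k"
      using trin_int[of k] by simp
    have jj: "int n = int j + int k" using k by simp
    show ?thesis unfolding of_nat_add e te using h1 h2 h3 jj
      by (simp only: of_nat_mult) algebra
  qed
  then show ?thesis by linarith
qed

lemma prod_lessThan_add: "(\<Prod>i<a+(b::nat). f i) = (\<Prod>i<a. f i) * (\<Prod>i<b. f (a+i))"
  by (induction b) (auto simp: mult.assoc)

lemma shift_prod:
  fixes q w z :: "'a::comm_ring_1"
  shows "(\<Prod>i<2*n. w * q^n + (z*q) * q^i) =
         q^(n*n + trin (Suc n)) * (\<Prod>m<n. (w + z * q^(Suc m)) * (z + w * q^m))"
proof -
  let ?f = "\<lambda>i. w * q^n + (z*q) * q^i"
  have "(\<Prod>i<2*n. ?f i) = (\<Prod>i<n. ?f i) * (\<Prod>m<n. ?f (n+m))"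
    using prod_lessThan_add[of ?f n n] by (simp add: mult_2)
  also have "(\<Prod>i<n. ?f i) = (\<Prod>m<n. ?f (n - Suc m))"
    using prod.nat_diff_reindex[of ?f n] by simp
  also have "\<dots> = (\<Prod>m<n. q^(n-m) * (z + w * q^m))"
  proof (rule prod.cong[OF refl])
    fix m assume "m \<in> {..<n}"
    then have m: "m < n" by simp
    have a: "q^n = q^(n-m) * q^m" using m by (simp add: power_add[symmetric])
    have b: "q * q^(n - Suc m) = q^(n-m)" using m by (simp add: Suc_diff_Suc[symmetric])
    show "?f (n - Suc m) = q^(n-m) * (z + w * q^m)"
      by (simp add: a algebra_simps) (metis b mult.assoc mult.commute)
  qed
  also have "(\<Prod>m<n. ?f (n+m)) = (\<Prod>m<n. q^n * (w + z * q^(Suc m)))"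
    by (rule prod.cong[OF refl]) (simp add: power_add algebra_simps)
  also have "(\<Prod>m<n. q^(n-m) * (z + w * q^m)) * (\<Prod>m<n. q^n * (w + z * q^(Suc m)))
      = (q^(\<Sum>m<n. n - m) * q^(n*n)) * (\<Prod>m<n. (w + z * q^(Suc m)) * (z + w * q^m))"
  proof -
    have "(\<Prod>m<n. q^(n-m) * (z + w * q^m)) = q^(\<Sum>m<n. n - m) * (\<Prod>m<n. z + w * q^m)"
      by (simp add: prod.distrib power_sum)
    moreover have "(\<Prod>m<n. q^n * (w + z * q^(Suc m))) = q^(n*n) * (\<Prod>m<n. w + z * q^(Suc m))"
      by (simp add: prod.distrib power_mult[symmetric] mult.commute)
    moreover have "(\<Prod>m<n. (w + z * q^(Suc m)) * (z + w * q^m)) = (\<Prod>m<n. w + z * q^(Suc m)) * (\<Prod>m<n. z + w * q^m)"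
      by (rule prod.distrib)
    ultimately show ?thesis by (simp only: ac_simps)
  qed
  finally show ?thesis by (simp add: sum_diff_trin power_add)
qed

lemma JTPf:
  fixes q w z :: "'a::idom"
  assumes "q \<noteq> 0"
  shows "(\<Prod>m<n. (w + z * q^(Suc m)) * (z + w * q^m)) =
         (\<Sum>j\<le>2*n. gb q (2*n) j * z^j * w^(2*n-j) * q^(Te n j))"
proof -
  let ?M = "n*n + trin (Suc n)"
  have "q^?M * (\<Prod>m<n. (w + z * q^(Suc m)) * (z + w * q^m)) = (\<Prod>i<2*n. w * q^n + (z*q) * q^i)"
    by (rule shift_prod[symmetric])
  also have "\<dots> = (\<Sum>j\<le>2*n. gb q (2*n) j * q ^ trin j * (z*q) ^ j * (w * q^n) ^ (2*n - j))"
    by (rule qbin)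
  also have "\<dots> = (\<Sum>j\<le>2*n. q^?M * (gb q (2*n) j * z^j * w^(2*n-j) * q^(Te n j)))"
  proof (rule sum.cong[OF refl])
    fix j assume "j \<in> {..2*n}"
    then have "trin j + j + n * (2 * n - j) = ?M + Te n j" using exp_identity by simp
    then have "q ^ trin j * q ^ j * q ^ (n * (2 * n - j)) = q^?M * q^(Te n j)"
      by (simp add: power_add[symmetric])
    then show "gb q (2*n) j * q ^ trin j * (z*q) ^ j * (w * q^n) ^ (2*n - j) =
        q^?M * (gb q (2*n) j * z^j * w^(2*n-j) * q^(Te n j))"
      by (simp add: power_mult_distrib power_mult[symmetric] algebra_simps)
  qed
  also have "\<dots> = q^?M * (\<Sum>j\<le>2*n. gb q (2*n) j * z^j * w^(2*n-j) * q^(Te n j))"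
    by (simp add: sum_distrib_left)
  finally show ?thesis using assms by simp
qed


lemma eqm_qpoch_le:
  assumes r: "r \<ge> 1" and "m \<le> m'"
  shows "eqm (Suc m) (qpoch ((fps_X::'a::comm_ring_1 fps)^r) m) (qpoch (fps_X^r) m')"
  using assms(2)
proof (induction m' rule: dec_induct)
  case base
  then show ?case by simp
next
  case (step m')
  have "eqm (Suc m) (1 - (fps_X::'a fps) ^ (r * Suc m')) 1"
  proof (rule eqm_one_minus_Xpow)
    have "m' \<le> r * m'" using r by simp
    moreover have "r * Suc m' = r + r * m'" by simp
    ultimately show "Suc m \<le> r * Suc m'" using r step by linarith
  qed
  moreover have "(fps_X^r)^Suc m' = (fps_X::'a fps)^(r * Suc m')" by (simp only: power_mult)
  ultimately have "eqm (Suc m) (1 - (fps_X^r)^Suc m') (1::'a fps)" by simp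
  then have "eqm (Suc m) (qpoch ((fps_X::'a fps)^r) m' * (1 - (fps_X^r) ^ Suc m')) (qpoch (fps_X^r) m' * 1)"
    by (intro eqm_mult eqm_refl)
  then have "eqm (Suc m) (qpoch ((fps_X::'a fps)^r) (Suc m')) (qpoch (fps_X^r) m')"
    by (simp only: qpoch_Suc mult_1_right)
  then show ?case using step(3) by (blast intro: eqm_trans eqm_sym)
qed

lemma qpoch_nth0:
  assumes "r \<ge> 1"
  shows "qpoch ((fps_X::'a::comm_ring_1 fps)^r) m $ 0 = 1"
  using eqm_qpoch_le[OF assms, of 0 m] by (simp add: eqm_def)

lemma unit_solve:
  fixes a b c g :: "'a::field fps"
  assumes "a * b * g = c" "a $ 0 \<noteq> 0" "b $ 0 \<noteq> 0"
  shows "g = c * inverse a * inverse b"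
proof -
  have "c * inverse a * inverse b = (inverse a * a) * (inverse b * b) * g"
    using assms(1) by (simp add: algebra_simps)
  also have "\<dots> = g" using assms(2,3) by (simp add: inverse_mult_eq_1)
  finally show ?thesis by simp
qed

lemma gb_trunc:
  assumes r: "r \<ge> 1" and j: "j \<le> 2*n"
  shows "eqm (Suc (min j (2*n-j))) (qpoch ((fps_X::'a::field fps)^r) n * gb (fps_X^r) (2*n) j) 1"
proof -
  let ?Q = "qpoch ((fps_X::'a fps)^r)"
  define m0 where "m0 = min j (2*n-j)"
  have Q0: "?Q m $ 0 = 1" for m by (rule qpoch_nth0[OF r])
  have gbe: "gb (fps_X^r) (2*n) j = ?Q (2*n) * inverse (?Q j) * inverse (?Q (2*n-j))"
    by (rule unit_solve) (use gb_qpoch[of j "2*n" "(fps_X::'a fps)^r"] j Q0 in auto)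
  have e: "m0 \<le> m \<Longrightarrow> eqm (Suc m0) (?Q m) (?Q m0)" for m
    by (rule eqm_sym, rule eqm_qpoch_le[OF r])
  have "eqm (Suc m0) (?Q n * (?Q (2*n) * inverse (?Q j) * inverse (?Q (2*n-j))))
       (?Q m0 * (?Q m0 * inverse (?Q m0) * inverse (?Q m0)))"
    by (intro eqm_mult eqm_inverse e) (auto simp: m0_def Q0)
  also have "?Q m0 * (?Q m0 * inverse (?Q m0) * inverse (?Q m0)) = 1"
    using Q0[of m0] by (simp add: inverse_mult_eq_1' mult.assoc)
  finally show ?thesis unfolding m0_def gbe .
qed

lemma bit_add_self[simp]: "(a::bit) + a = 0"
  by (cases "a = 0") (auto simp: bit_not_zero_iff one_add_one)

lemma bfps_add_self[simp]: "(f::bit fps) + f = 0"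
  by (rule fps_ext) (simp only: fps_add_nth bit_add_self fps_zero_nth)

lemma bfps_two[simp]: "(2::bit fps) = 0"
  by (metis bfps_add_self one_add_one)

lemma bfps_uminus[simp]: "- (f::bit fps) = f"
  by (metis add_left_cancel bfps_add_self right_minus)

lemma bfps_diff: "(f::bit fps) - g = f + g"
  by (metis bfps_uminus diff_conv_add_uminus)

definition Eb :: "nat \<Rightarrow> bit fps" where
  "Eb a = 1 + fps_X ^ a"

lemma Eb_sq: "Eb a ^ 2 = Eb (2*a)"
proof -
  have "Eb a ^ 2 = 1 + (fps_X ^ a + fps_X ^ a) + fps_X ^ a * fps_X ^ a"
    by (simp add: Eb_def power2_eq_square algebra_simps)
  also have "\<dots> = Eb (2*a)" by (simp add: Eb_def power_add[symmetric] mult_2)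
  finally show ?thesis .
qed

lemma qpoch_bit: "qpoch ((fps_X::bit fps)^r) m = (\<Prod>i\<in>{1..m}. Eb (r*i))"
  by (simp add: qpoch_def Eb_def bfps_diff power_mult)

definition exr :: "nat \<Rightarrow> nat \<Rightarrow> nat \<Rightarrow> nat" where
  "exr r n j = 2*n - j + r * Te n j - n"

lemma trin_Suc_ge: "k \<le> trin (Suc k)" by simp

lemma exr_ge:
  assumes "r \<ge> 1" "j \<le> 2*n"
  shows "n \<le> 2*n - j + r * Te n j"
proof (cases "n \<le> j")
  case True
  have "Te n j = trin (Suc (j - n))" using True by (simp add: Te_def del: trin.simps)
  then have "j - n \<le> Te n j" by simp
  moreover have "Te n j \<le> r * Te n j" using assms by simp
  ultimately show ?thesis using assms by linarith
next
  case False then show ?thesis by simp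
qed

lemma SPEC:
  assumes r: "r \<ge> 1"
  shows "(\<Prod>m<n. Eb (r*m + r - 1) * Eb (r*m + 1)) =
         (\<Sum>j\<le>2*n. gb ((fps_X::bit fps)^r) (2*n) j * fps_X ^ (exr r n j))"
proof -
  have X0: "(fps_X::bit fps)^r \<noteq> 0" by simp
  have J: "(\<Prod>m<n. (fps_X + 1 * (fps_X^r)^(Suc m)) * (1 + fps_X * (fps_X^r)^m)) =
         (\<Sum>j\<le>2*n. gb ((fps_X::bit fps)^r) (2*n) j * 1^j * fps_X^(2*n-j) * (fps_X^r)^(Te n j))"
    by (rule JTPf[OF X0])
  have l: "(fps_X + 1 * (fps_X^r)^(Suc m)) * (1 + fps_X * (fps_X^r)^m) =
        fps_X * (Eb (r*m + r - 1) * Eb (r*m + 1))" for m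
  proof -
    have e: "r * Suc m = Suc (r*m + r - 1)" using r by simp
    have "(fps_X::bit fps) + 1 * (fps_X^r)^(Suc m) = fps_X + fps_X^(r * Suc m)"
      by (simp only: power_mult mult_1)
    also have "\<dots> = fps_X * Eb (r*m + r - 1)"
      unfolding e by (simp add: Eb_def algebra_simps)
    finally have "(fps_X::bit fps) + 1 * (fps_X^r)^(Suc m) = fps_X * Eb (r*m + r - 1)" .
    moreover have "(1::bit fps) + fps_X * (fps_X^r)^m = Eb (r*m + 1)"
      by (simp add: Eb_def power_mult[symmetric] algebra_simps)
    ultimately show ?thesis by (simp add: algebra_simps)
  qed
  have LHS: "(\<Prod>m<n. (fps_X + 1 * (fps_X^r)^(Suc m)) * (1 + fps_X * (fps_X^r)^m)) =
        fps_X^n * (\<Prod>m<n. Eb (r*m + r - 1) * Eb (r*m + 1))"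
    unfolding l by (simp add: prod.distrib)
  have RHS: "(\<Sum>j\<le>2*n. gb ((fps_X::bit fps)^r) (2*n) j * 1^j * fps_X^(2*n-j) * (fps_X^r)^(Te n j))
      = fps_X^n * (\<Sum>j\<le>2*n. gb ((fps_X::bit fps)^r) (2*n) j * fps_X ^ (exr r n j))"
    unfolding sum_distrib_left
  proof (rule sum.cong[OF refl])
    fix j assume "j \<in> {..2*n}"
    then have "2*n - j + r * Te n j = n + exr r n j" using exr_ge[OF r, of j n] by (simp add: exr_def)
    then have "(fps_X::bit fps)^(2*n-j) * (fps_X^r)^(Te n j) = fps_X^n * fps_X ^ (exr r n j)"
      by (simp add: power_mult[symmetric] power_add[symmetric])
    then show "gb ((fps_X::bit fps)^r) (2*n) j * 1^j * fps_X^(2*n-j) * (fps_X^r)^(Te n j) =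
        fps_X^n * (gb ((fps_X::bit fps)^r) (2*n) j * fps_X ^ (exr r n j))"
      by (simp add: algebra_simps)
  qed
  show ?thesis using J unfolding LHS RHS by simp
qed

lemma ex_large:
  assumes r: "r \<ge> 1" and n: "2*K \<le> n" and j: "j \<le> 2*n" and m: "Suc (min j (2*n-j)) < K"
  shows "K \<le> exr r n j"
proof (cases "j \<le> n")
  case True
  then have "min j (2*n-j) = j" by simp
  then show ?thesis using m n j by (simp add: exr_def)
next
  case False
  define k where "k = j - n"
  have mj: "min j (2*n-j) = 2*n - j" using False by simp
  have Te: "Te n j = trin (Suc k)" using False by (simp add: Te_def k_def del: trin.simps)
  have t1: "trin (Suc k) = trin k + k" by simp
  have t2: "k - 1 \<le> trin k" by (cases k) auto
  have t3: "Te n j \<le> r * Te n j" using r by simp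
  show ?thesis using m n j mj Te t1 t2 t3 False unfolding exr_def k_def by linarith
qed

lemma TRUNC:
  assumes r: "r \<ge> 1" and n: "2*K \<le> n"
  shows "eqm K (qpoch ((fps_X::bit fps)^r) n * (\<Prod>m<n. Eb (r*m + r - 1) * Eb (r*m + 1)))
               (\<Sum>j\<le>2*n. fps_X ^ (exr r n j))"
proof -
  have "qpoch ((fps_X::bit fps)^r) n * (\<Prod>m<n. Eb (r*m + r - 1) * Eb (r*m + 1)) =
        (\<Sum>j\<le>2*n. (qpoch ((fps_X::bit fps)^r) n * gb (fps_X^r) (2*n) j) * fps_X ^ (exr r n j))"
    by (subst SPEC[OF r]) (simp add: sum_distrib_left mult.assoc)
  also have "eqm K \<dots> (\<Sum>j\<le>2*n. fps_X ^ (exr r n j))"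
  proof (rule eqm_sum)
    fix j assume "j \<in> {..2*n}"
    then have j: "j \<le> 2*n" by simp
    show "eqm K ((qpoch ((fps_X::bit fps)^r) n * gb (fps_X^r) (2*n) j) * fps_X ^ (exr r n j)) (fps_X ^ (exr r n j))"
    proof (cases "K \<le> Suc (min j (2*n-j))")
      case True
      have "eqm K (qpoch ((fps_X::bit fps)^r) n * gb (fps_X^r) (2*n) j) 1"
        by (rule eqm_mono[OF gb_trunc[OF r j] True])
      from eqm_mult[OF this eqm_refl[of K "fps_X ^ (exr r n j)"]] show ?thesis by simp
    next
      case False
      then have K: "K \<le> exr r n j" using ex_large[OF r n j] by simp
      have a: "eqm K (fps_X ^ (exr r n j) * (qpoch ((fps_X::bit fps)^r) n * gb (fps_X^r) (2*n) j)) 0"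
        by (rule eqm_Xpow_mult[OF K])
      have b: "eqm K (fps_X ^ (exr r n j) * (1::bit fps)) 0"
        by (rule eqm_Xpow_mult[OF K])
      show ?thesis using eqm_trans[OF a eqm_sym[OF b]] by (simp add: mult.commute)
    qed
  qed
  finally show ?thesis .
qed


lemma sum_Xpow_nth:
  assumes "finite A"
  shows "(\<Sum>j\<in>A. (fps_X::'a::comm_ring_1 fps) ^ (f j)) $ i = of_nat (card {j\<in>A. f j = i})"
proof -
  have "(\<Sum>j\<in>A. (fps_X::'a fps) ^ (f j)) $ i = (\<Sum>j\<in>A. if f j = i then 1 else 0)"
    by (simp add: fps_sum_nth eq_commute)
  also have "\<dots> = (\<Sum>j\<in>{j\<in>A. f j = i}. 1)"
    using sum.inter_filter[OF assms, of "\<lambda>_. (1::'a)" "\<lambda>j. f j = i"] by simp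
  finally show ?thesis by simp
qed

lemma two_Te:
  assumes "j \<le> 2*n"
  shows "2 * int (Te n j) = (int j - int n) * (int j - int n + 1)"
proof (cases "n \<le> j")
  case True
  then have "Te n j = trin (Suc (j - n))" by (simp add: Te_def del: trin.simps)
  moreover have "int (Suc (j - n)) = int j - int n + 1" using True by simp
  ultimately show ?thesis using trin_int[of "Suc (j - n)"] by (simp add: algebra_simps)
next
  case False
  then have "Te n j = trin (n - j)" by (simp add: Te_def del: trin.simps)
  moreover have "int (n - j) = int n - int j" using False by simp
  ultimately show ?thesis using trin_int[of "n - j"] by (simp add: algebra_simps)
qed

lemma exr_int:
  assumes r: "r \<ge> 1" and j: "j \<le> 2*n"
  shows "2 * int (exr r n j) = int r * (int j - int n) * (int j - int n + 1) - 2 * (int j - int n)"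
proof -
  have ge: "n \<le> 2*n - j + r * Te n j" by (rule exr_ge[OF r j])
  have "int (exr r n j) = int (2*n - j) + int r * int (Te n j) - int n"
    using ge by (simp add: exr_def of_nat_diff)
  moreover have "int (2*n - j) = 2 * int n - int j" using j by simp
  ultimately have "2 * int (exr r n j) = 2 * (int n - int j) + int r * (2 * int (Te n j))"
    by (simp add: algebra_simps)
  then show ?thesis using two_Te[OF j] by (simp add: algebra_simps)
qed

lemma quad_bound:
  fixes k :: int
  assumes "r \<ge> 2"
  shows "2 * \<bar>k\<bar> \<le> int r * k * (k + 1) - 2 * k"
proof (cases "k \<ge> 0")
  case True
  have a: "0 \<le> k * (k + 1)" using True by simp
  have "2 * (k * (k + 1)) \<le> int r * (k * (k + 1))"
    using assms a by (intro mult_right_mono) auto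
  moreover have "k \<le> k * k" using True by (cases "k = 0") (auto simp: mult_le_cancel_left1)
  ultimately show ?thesis using True by (simp add: algebra_simps)
next
  case False
  have "0 \<le> k * (k + 1)" using False by (simp add: zero_le_mult_iff)
  then have "0 \<le> int r * (k * (k + 1))" by simp
  then show ?thesis using False by (simp add: algebra_simps)
qed

lemma COEF:
  assumes r: "r \<ge> 2" and i: "i \<le> n"
  shows "(\<Sum>j\<le>2*n. (fps_X::'a::comm_ring_1 fps) ^ (exr r n j)) $ i =
         of_nat (card {k::int. 2 * int i = int r * k * (k + 1) - 2 * k})"
proof -
  have r1: "r \<ge> 1" using r by simp
  let ?A = "{j\<in>{..2*n}. exr r n j = i}"
  let ?B = "{k::int. 2 * int i = int r * k * (k + 1) - 2 * k}"
  have "bij_betw (\<lambda>j. int j - int n) ?A ?B"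
  proof (rule bij_betw_byWitness[where f' = "\<lambda>k. nat (k + int n)"])
    show "\<forall>a\<in>?A. nat (int a - int n + int n) = a" by auto
    show "\<forall>a'\<in>?B. int (nat (a' + int n)) - int n = a'"
    proof
      fix k assume "k \<in> ?B"
      then have "2 * \<bar>k\<bar> \<le> 2 * int i" using quad_bound[OF r, of k] by simp
      then show "int (nat (k + int n)) - int n = k" using i by simp
    qed
    show "(\<lambda>j. int j - int n) ` ?A \<subseteq> ?B"
    proof
      fix x assume "x \<in> (\<lambda>j. int j - int n) ` ?A"
      then obtain j where "j \<le> 2*n" "exr r n j = i" "x = int j - int n" by auto
      then show "x \<in> ?B" using exr_int[OF r1, of j n] by simp
    qed
    show "(\<lambda>k. nat (k + int n)) ` ?B \<subseteq> ?A"
    proof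
      fix y assume "y \<in> (\<lambda>k. nat (k + int n)) ` ?B"
      then obtain k where k: "k \<in> ?B" and y: "y = nat (k + int n)" by auto
      have "2 * \<bar>k\<bar> \<le> 2 * int i" using k quad_bound[OF r, of k] by simp
      then have y2: "y \<le> 2*n" and yk: "int y - int n = k" using i y by auto
      have "2 * int (exr r n y) = 2 * int i" using exr_int[OF r1 y2] yk k by simp
      then show "y \<in> ?A" using y2 by simp
    qed
  qed
  then have "card ?A = card ?B" by (rule bij_betw_same_card)
  then show ?thesis by (simp add: sum_Xpow_nth)
qed


definition Fm :: "nat \<Rightarrow> bit fps" where
  "Fm m = (\<Prod>i\<in>{1..m}. Eb i)"

lemma Fm_0[simp]: "Fm 0 = 1" by (simp add: Fm_def)
lemma Fm_Suc: "Fm (Suc m) = Fm m * Eb (Suc m)"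
  by (simp add: Fm_def prod.cl_ivl_Suc)

lemma eqm_Eb: "K \<le> a \<Longrightarrow> eqm K (Eb a) 1"
  unfolding Eb_def using eqm_add[OF eqm_refl[of K 1] eqm_Xpow_mult[of K a 1]] by simp

lemma eqm_Fm:
  assumes "L \<le> M"
  shows "eqm (Suc L) (Fm L) (Fm M)"
  using assms
proof (induction M rule: dec_induct)
  case base then show ?case by simp
next
  case (step M)
  have "eqm (Suc L) (Fm M * Eb (Suc M)) (Fm M * 1)"
    by (intro eqm_mult eqm_refl eqm_Eb) (use step in simp)
  then show ?case using step(3) by (simp add: Fm_Suc) (blast intro: eqm_trans eqm_sym)
qed

lemma Fm_nth0: "Fm m $ 0 = 1"
  using eqm_Fm[of 0 m] by (simp add: eqm_def)

lemma bit_one_minus: "1 - ((fps_X::bit fps)^r)^k = Eb (r*k)"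
  by (simp add: Eb_def bfps_diff power_mult)

lemma qpoch_bit_Suc: "qpoch ((fps_X::bit fps)^r) (Suc n) = qpoch (fps_X^r) n * Eb (r * Suc n)"
  by (simp only: qpoch_Suc bit_one_minus)

lemma Fm_3n: "qpoch ((fps_X::bit fps)^3) n * (\<Prod>m<n. Eb (3*m + 3 - 1) * Eb (3*m + 1)) = Fm (3*n)"
proof (induction n)
  case 0 then show ?case by simp
next
  case (Suc n)
  have e: "3 * Suc n = Suc (Suc (Suc (3*n)))" by simp
  have "qpoch ((fps_X::bit fps)^3) (Suc n) * (\<Prod>m<Suc n. Eb (3*m + 3 - 1) * Eb (3*m + 1))
      = (qpoch ((fps_X::bit fps)^3) n * (\<Prod>m<n. Eb (3*m + 3 - 1) * Eb (3*m + 1)))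
        * (Eb (Suc (3*n)) * Eb (Suc (Suc (3*n))) * Eb (3 * Suc n))"
    by (simp add: qpoch_bit_Suc algebra_simps)
  also have "\<dots> = Fm (3 * Suc n)"
    unfolding Suc.IH e Fm_Suc by (simp add: algebra_simps)
  finally show ?case .
qed

definition Pe :: "bit fps" where
  "Pe = Abs_fps (\<lambda>i. of_nat (card {k::int. 2 * int i = k * (3*k + 1)}))"

definition Ps :: "bit fps" where
  "Ps = Abs_fps (\<lambda>i. of_nat (card {k::int. int i = k * (2*k + 1)}))"

lemma EULER: "eqm (Suc L) (Fm L) Pe"
proof -
  define K where "K = Suc L"
  define n where "n = 2 * K"
  have T: "eqm K (qpoch ((fps_X::bit fps)^3) n * (\<Prod>m<n. Eb (3*m + 3 - 1) * Eb (3*m + 1)))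
               (\<Sum>j\<le>2*n. fps_X ^ (exr 3 n j))"
    by (rule TRUNC) (auto simp: n_def)
  have S: "eqm K (\<Sum>j\<le>2*n. (fps_X::bit fps) ^ (exr 3 n j)) Pe"
    unfolding eqm_def
  proof (intro allI impI)
    fix i assume "i < K"
    then have "i \<le> n" by (simp add: n_def)
    then have "(\<Sum>j\<le>2*n. (fps_X::bit fps) ^ (exr 3 n j)) $ i =
        of_nat (card {k::int. 2 * int i = int 3 * k * (k + 1) - 2 * k})"
      by (intro COEF) auto
    also have "{k::int. 2 * int i = int 3 * k * (k + 1) - 2 * k} = {k::int. 2 * int i = k * (3*k + 1)}"
      by (auto simp: algebra_simps)
    finally show "(\<Sum>j\<le>2*n. (fps_X::bit fps) ^ (exr 3 n j)) $ i = Pe $ i" by (simp add: Pe_def)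
  qed
  have "eqm K (Fm L) (Fm (3*n))" unfolding K_def by (rule eqm_Fm) (simp add: n_def K_def)
  moreover have "eqm K (Fm (3*n)) (\<Sum>j\<le>2*n. (fps_X::bit fps) ^ (exr 3 n j))"
    using T by (simp only: Fm_3n)
  ultimately have "eqm K (Fm L) (\<Sum>j\<le>2*n. (fps_X::bit fps) ^ (exr 3 n j))"
    by (rule eqm_trans)
  then show ?thesis using S K_def by (blast intro: eqm_trans)
qed

lemma Eb_4: "Eb i ^ 4 = Eb (4*i)"
proof -
  have "Eb i ^ 4 = (Eb i ^ 2) ^ 2" by (simp add: power_mult[symmetric])
  also have "\<dots> = Eb (4*i)" by (simp add: Eb_sq)
  finally show ?thesis .
qed

lemma Fm_pow4: "Fm n ^ 4 = qpoch ((fps_X::bit fps)^4) n"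
  by (simp add: Fm_def qpoch_bit prod_power_distrib Eb_4)

lemma O_Fm: "(\<Prod>m<n. Eb (4*m + 4 - 1) * Eb (4*m + 1)) * Fm (2*n) ^ 2 = Fm (4*n)"
proof (induction n)
  case 0 then show ?case by simp
next
  case (Suc n)
  have e1: "2 * Suc n = Suc (Suc (2*n))" by simp
  have e2: "4 * Suc n = Suc (Suc (Suc (Suc (4*n))))" by simp
  have e3: "4*n + 4 - 1 = Suc (Suc (Suc (4*n)))" by simp
  have s1: "Eb (Suc (2*n)) ^ 2 = Eb (Suc (Suc (4*n)))" by (simp add: Eb_sq)
  have s2: "Eb (Suc (Suc (2*n))) ^ 2 = Eb (Suc (Suc (Suc (Suc (4*n)))))" by (simp add: Eb_sq)
  have "(\<Prod>m<Suc n. Eb (4*m + 4 - 1) * Eb (4*m + 1)) * Fm (2 * Suc n) ^ 2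
      = ((\<Prod>m<n. Eb (4*m + 4 - 1) * Eb (4*m + 1)) * Fm (2*n) ^ 2) *
        (Eb (Suc (4*n)) * Eb (4*n + 4 - 1) * Eb (Suc (2*n)) ^ 2 * Eb (Suc (Suc (2*n))) ^ 2)"
    unfolding e1 Fm_Suc by (simp add: power_mult_distrib algebra_simps)
  also have "\<dots> = Fm (4 * Suc n)"
    unfolding Suc.IH s1 s2 e2 e3 Fm_Suc by (simp add: algebra_simps)
  finally show ?case .
qed

lemma JACOBI: "eqm (Suc L) (Fm L ^ 3) Ps"
proof -
  define K where "K = Suc L"
  define n where "n = 2 * K"
  let ?O = "\<Prod>m<n. Eb (4*m + 4 - 1) * Eb (4*m + 1)"
  let ?P = "qpoch ((fps_X::bit fps)^4) n * ?O"
  have T: "eqm K ?P (\<Sum>j\<le>2*n. fps_X ^ (exr 4 n j))"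
    by (rule TRUNC) (auto simp: n_def)
  have S: "eqm K (\<Sum>j\<le>2*n. (fps_X::bit fps) ^ (exr 4 n j)) Ps"
    unfolding eqm_def
  proof (intro allI impI)
    fix i assume "i < K"
    then have "i \<le> n" by (simp add: n_def)
    then have "(\<Sum>j\<le>2*n. (fps_X::bit fps) ^ (exr 4 n j)) $ i =
        of_nat (card {k::int. 2 * int i = int 4 * k * (k + 1) - 2 * k})"
      by (intro COEF) auto
    also have "{k::int. 2 * int i = int 4 * k * (k + 1) - 2 * k} = {k::int. int i = k * (2*k + 1)}"
      by (auto simp: algebra_simps)
    finally show "(\<Sum>j\<le>2*n. (fps_X::bit fps) ^ (exr 4 n j)) $ i = Ps $ i" by (simp add: Ps_def)
  qed
  have id: "?P * Fm (2*n) ^ 2 = Fm n ^ 4 * Fm (4*n)"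
    by (simp add: Fm_pow4[symmetric] O_Fm[symmetric] mult.assoc)
  have P: "?P = Fm n ^ 4 * Fm (4*n) * inverse (Fm (2*n) ^ 2)"
  proof -
    have u: "Fm (2*n) ^ 2 * inverse (Fm (2*n) ^ 2) = 1"
      by (rule inverse_mult_eq_1') (simp add: Fm_nth0)
    have "?P = ?P * (Fm (2*n) ^ 2 * inverse (Fm (2*n) ^ 2))" by (simp add: u)
    also have "\<dots> = Fm n ^ 4 * Fm (4*n) * inverse (Fm (2*n) ^ 2)"
      by (simp only: mult.assoc[symmetric] id)
    finally show ?thesis .
  qed
  have LK: "L \<le> n" "L \<le> 2*n" "L \<le> 4*n" by (auto simp: n_def K_def)
  have "eqm K (Fm n ^ 4 * Fm (4*n) * inverse (Fm (2*n) ^ 2))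
              (Fm L ^ 4 * Fm L * inverse (Fm L ^ 2))"
    unfolding K_def
    by (intro eqm_mult eqm_power eqm_inverse eqm_sym[OF eqm_Fm])
       (use LK in \<open>auto simp: Fm_nth0\<close>)
  also have "Fm L ^ 4 * Fm L * inverse (Fm L ^ 2) = Fm L ^ 3"
  proof -
    have u: "Fm L ^ 2 * inverse (Fm L ^ 2) = 1"
      by (rule inverse_mult_eq_1') (simp add: Fm_nth0)
    have "Fm L ^ 4 * Fm L = Fm L ^ 3 * Fm L ^ 2"
      by (simp add: eval_nat_numeral algebra_simps)
    then have "Fm L ^ 4 * Fm L * inverse (Fm L ^ 2) = Fm L ^ 3 * (Fm L ^ 2 * inverse (Fm L ^ 2))"
      by (simp only: mult.assoc)
    then show ?thesis by (simp add: u)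
  qed
  finally have "eqm K ?P (Fm L ^ 3)" unfolding P .
  then show ?thesis using T S K_def by (blast intro: eqm_trans eqm_sym)
qed


lemma card_inj_fiber:
  assumes "inj h"
  shows "card {k. c = h k} = (if \<exists>k. c = h k then 1 else 0)"
proof (cases "\<exists>k. c = h k")
  case True
  then obtain k0 where k0: "c = h k0" by auto
  have "{k. c = h k} = {k0}" using k0 assms by (auto dest: injD)
  then show ?thesis using True by simp
next
  case False
  then show ?thesis by simp
qed

lemma inj_h1: "inj (\<lambda>k::int. k * (2*k + 1))"
proof (rule injI)
  fix k l :: int assume "k * (2*k + 1) = l * (2*l + 1)"
  then have "(k - l) * (2*k + 2*l + 1) = 0" by algebra
  moreover have "2*k + 2*l + 1 \<noteq> 0" by presburger
  ultimately show "k = l" by simp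
qed

lemma inj_h2: "inj (\<lambda>k::int. k * (3*k + 1))"
proof (rule injI)
  fix k l :: int assume "k * (3*k + 1) = l * (3*l + 1)"
  then have "(k - l) * (3*k + 3*l + 1) = 0" by algebra
  moreover have "3*k + 3*l + 1 \<noteq> 0" by presburger
  ultimately show "k = l" by simp
qed

lemma mod3_cases:
  fixes k :: int
  obtains a where "k = 3*a" | a where "k = 3*a + 1" | a where "k = 3*a + 2"
proof -
  have e: "k = 3 * (k div 3) + k mod 3" by simp
  have "k mod 3 = 0 \<or> k mod 3 = 1 \<or> k mod 3 = 2" by presburger
  then show ?thesis
  proof (elim disjE)
    assume "k mod 3 = 0" then show ?thesis using that(1)[of "k div 3"] e by simp
  next
    assume "k mod 3 = 1" then show ?thesis using that(2)[of "k div 3"] e by simp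
  next
    assume "k mod 3 = 2" then show ?thesis using that(3)[of "k div 3"] e by simp
  qed
qed

lemma mod2_cases:
  fixes k :: int
  obtains b where "k = 2*b" | b where "k = 2*b + 1"
proof -
  have e: "k = 2 * (k div 2) + k mod 2" by simp
  have "k mod 2 = 0 \<or> k mod 2 = 1" by presburger
  then show ?thesis
  proof (elim disjE)
    assume "k mod 2 = 0" then show ?thesis using that(1)[of "k div 2"] e by simp
  next
    assume "k mod 2 = 1" then show ?thesis using that(2)[of "k div 2"] e by simp
  qed
qed

lemma h1_0: "(3*a) * (2*(3*a) + 1) = 3 * (a * (6*a + 1))" for a :: int by algebra
lemma h1_1: "(3*a+1) * (2*(3*a+1) + 1) = 3 * ((3*a+1) * (2*a + 1))" for a :: int by algebra
lemma h1_2: "(3*a+2) * (2*(3*a+2) + 1) = 3 * (3 * ((a+1) * (2*a+1))) + 1" for a :: int by algebra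

lemma nomod1: "3 * (x::int) + 2 = 3 * y \<Longrightarrow> False" by presburger
lemma nomod2: "3 * (x::int) + 2 = 3 * y + 1 \<Longrightarrow> False" by presburger
lemma nomod3: "3 * (x::int) + 1 = 3 * y \<Longrightarrow> False" by presburger
lemma nomod4: "3 * (x::int) = 3 * y + 1 \<Longrightarrow> False" by presburger

lemma D2: "\<not> (\<exists>k::int. int (3*u+2) = k * (2*k + 1))"
proof
  assume "\<exists>k::int. int (3*u+2) = k * (2*k + 1)"
  then obtain k :: int where k0: "int (3*u+2) = k * (2*k + 1)" by blast
  then have k: "3 * int u + 2 = k * (2*k + 1)" by simp
  show False
  proof (cases k rule: mod3_cases)
    case (1 a) then show False using k h1_0[of a] nomod1 by metis
  next
    case (2 a) then show False using k h1_1[of a] nomod1 by metis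
  next
    case (3 a) then show False using k h1_2[of a] nomod2 by metis
  qed
qed

lemma D0: "(\<exists>k::int. int (3*u) = k * (2*k + 1)) \<longleftrightarrow> (\<exists>k::int. 2 * int u = k * (3*k + 1))"
proof
  assume "\<exists>k::int. int (3*u) = k * (2*k + 1)"
  then obtain k :: int where k0: "int (3*u) = k * (2*k + 1)" by blast
  then have k: "3 * int u = k * (2*k + 1)" by simp
  show "\<exists>k::int. 2 * int u = k * (3*k + 1)"
  proof (cases k rule: mod3_cases)
    case (1 a)
    have "3 * int u = (3*a) * (2*(3*a) + 1)" using k 1 by simp
    also have "\<dots> = 3 * (a * (6*a + 1))" by (rule h1_0)
    finally have "int u = a * (6*a + 1)" by simp
    then have "2 * int u = (2*a) * (3*(2*a) + 1)" by algebra
    then show ?thesis by blast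
  next
    case (2 a)
    have "3 * int u = (3*a+1) * (2*(3*a+1) + 1)" using k 2 by simp
    also have "\<dots> = 3 * ((3*a+1) * (2*a + 1))" by (rule h1_1)
    finally have "int u = (3*a+1) * (2*a + 1)" by simp
    then have "2 * int u = (-(2*a+1)) * (3*(-(2*a+1)) + 1)" by algebra
    then show ?thesis by blast
  next
    case (3 a) then show ?thesis using k h1_2[of a] nomod4 by metis
  qed
next
  assume "\<exists>k::int. 2 * int u = k * (3*k + 1)"
  then obtain k :: int where k: "2 * int u = k * (3*k + 1)" by auto
  show "\<exists>k::int. int (3*u) = k * (2*k + 1)"
  proof (cases k rule: mod2_cases)
    case (1 b)
    then have "2 * int u = 2 * (b * (6*b + 1))" using k by algebra
    then have "int u = b * (6*b + 1)" by simp
    then have "int (3*u) = (3*b) * (2*(3*b) + 1)" by simp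
    then show ?thesis by blast
  next
    case (2 b)
    then have "2 * int u = 2 * ((2*b+1) * (3*b + 2))" using k by algebra
    then have "int u = (2*b+1) * (3*b + 2)" by simp
    then have "int (3*u) = (-(3*b+2)) * (2*(-(3*b+2)) + 1)" by (simp add: algebra_simps)
    then show ?thesis by blast
  qed
qed

lemma D1: "(\<exists>k::int. int (3*u+1) = k * (2*k + 1)) \<longleftrightarrow>
           (3 dvd u \<and> (\<exists>k::int. int (u div 3) = k * (2*k + 1)))"
proof
  assume "\<exists>k::int. int (3*u+1) = k * (2*k + 1)"
  then obtain k :: int where k0: "int (3*u+1) = k * (2*k + 1)" by blast
  then have k: "3 * int u + 1 = k * (2*k + 1)" by simp
  show "3 dvd u \<and> (\<exists>k::int. int (u div 3) = k * (2*k + 1))"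
  proof (cases k rule: mod3_cases)
    case (1 a) then show ?thesis using k h1_0[of a] nomod3 by metis
  next
    case (2 a) then show ?thesis using k h1_1[of a] nomod3 by metis
  next
    case (3 a)
    have "3 * int u + 1 = (3*a+2) * (2*(3*a+2) + 1)" using k 3 by simp
    also have "\<dots> = 3 * (3 * ((a+1) * (2*a+1))) + 1" by (rule h1_2)
    finally have u: "int u = 3 * ((a+1) * (2*a+1))" by simp
    then have d: "3 dvd u" by presburger
    then obtain v where v: "u = 3 * v" by auto
    then have "int v = (a+1) * (2*a+1)" using u by simp
    then have "int (u div 3) = (-(a+1)) * (2*(-(a+1)) + 1)" using v by (simp add: algebra_simps)
    then show ?thesis using d by blast
  qed
next
  assume "3 dvd u \<and> (\<exists>k::int. int (u div 3) = k * (2*k + 1))"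
  then obtain v k where v: "u = 3 * v" and k: "int v = k * (2*k + 1)" by auto
  have "int (3*u+1) = (-3*k - 1) * (2*(-3*k - 1) + 1)" using v k by (simp add: algebra_simps)
  then show "\<exists>k::int. int (3*u+1) = k * (2*k + 1)" by blast
qed

lemma Ps_nth: "Ps $ i = (if \<exists>k::int. int i = k * (2*k + 1) then 1 else 0)"
  unfolding Ps_def using card_inj_fiber[OF inj_h1, of "int i"] by simp

lemma Pe_nth: "Pe $ i = (if \<exists>k::int. 2 * int i = k * (3*k + 1) then 1 else 0)"
  unfolding Pe_def using card_inj_fiber[OF inj_h2, of "2 * int i"] by simp

lemma DISS: "Ps = dil 3 Pe + fps_X * dil 9 Ps"
proof (rule fps_ext)
  fix i
  have d3: "dil 3 Pe $ i = (if 3 dvd i then Pe $ (i div 3) else 0)" by (simp add: dil_nth)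
  have d9: "(fps_X * dil 9 Ps) $ i = (if i = 0 then 0 else if 9 dvd (i - 1) then Ps $ ((i - 1) div 9) else 0)"
    by (simp add: dil_nth)
  define u where "u = i div 3"
  have "i = 3*u + i mod 3" by (simp add: u_def)
  moreover have "i mod 3 = 0 \<or> i mod 3 = 1 \<or> i mod 3 = 2" by presburger
  ultimately consider "i = 3*u" | "i = 3*u + 1" | "i = 3*u + 2" by auto
  then show "Ps $ i = (dil 3 Pe + fps_X * dil 9 Ps) $ i"
  proof cases
    case 1
    have "\<not> (i \<noteq> 0 \<and> 9 dvd (i - 1))" using 1 by presburger
    then have "(fps_X * dil 9 Ps) $ i = 0" using d9 by auto
    moreover have "dil 3 Pe $ i = Pe $ u" using d3 1 by simp
    ultimately show ?thesis using 1 D0[of u] by (simp add: Ps_nth Pe_nth)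
  next
    case 2
    have "\<not> 3 dvd i" using 2 by presburger
    then have "dil 3 Pe $ i = 0" using d3 by simp
    moreover have "(fps_X * dil 9 Ps) $ i = (if 3 dvd u then Ps $ (u div 3) else 0)"
    proof -
      have a: "i \<noteq> 0" "i - 1 = 3*u" using 2 by auto
      have "9 dvd (3*u) \<longleftrightarrow> 3 dvd u" by presburger
      moreover have "3*u div 9 = u div 3" by simp
      ultimately show ?thesis using d9 a by simp
    qed
    ultimately show ?thesis using 2 D1[of u] by (auto simp: Ps_nth)
  next
    case 3
    have "\<not> 3 dvd i" using 3 by presburger
    then have "dil 3 Pe $ i = 0" using d3 by simp
    moreover have "\<not> 9 dvd (i - 1)" using 3 by presburger
    then have "(fps_X * dil 9 Ps) $ i = 0" using d9 by auto
    ultimately show ?thesis using 3 D2[of u] by (simp add: Ps_nth)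
  qed
qed


lemma le_sum_mset_nat: "x \<in># (M::nat multiset) \<Longrightarrow> x \<le> sum_mset M"
  by (metis le_add1 sum_mset.remove)

lemma cp_MS: "colored_partitions k P n = MS ({a\<in>{1..n}. P a} \<times> {..<k}) fst n"
proof (intro equalityI subsetI)
  fix M assume M: "M \<in> colored_partitions k P n"
  have "fst x \<le> n" if "x \<in># M" for x
    using le_sum_mset_nat[of "fst x" "image_mset fst M"] that M by (auto simp: colored_partitions_def)
  then show "M \<in> MS ({a\<in>{1..n}. P a} \<times> {..<k}) fst n"
    using M by (fastforce simp: colored_partitions_def MS_def)
next
  fix M assume "M \<in> MS ({a\<in>{1..n}. P a} \<times> {..<k}) fst n"
  then show "M \<in> colored_partitions k P n"
    by (fastforce simp: colored_partitions_def MS_def)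
qed

lemma card_cp:
  "of_nat (card (colored_partitions k P n)) = (\<Prod>a\<in>{a\<in>{1..n}. P a}. G a ^ k :: 'a::comm_ring_1 fps) $ n"
proof -
  have "of_nat (card (colored_partitions k P n)) =
        (\<Prod>t\<in>{a\<in>{1..n}. P a} \<times> {..<k}. G (fst t) :: 'a fps) $ n"
    unfolding cp_MS by (rule conjunct2[OF MS_count]) auto
  also have "(\<Prod>t\<in>{a\<in>{1..n}. P a} \<times> {..<k}. G (fst t) :: 'a fps) =
             (\<Prod>(a,c)\<in>{a\<in>{1..n}. P a} \<times> {..<k}. G a)"
    by (simp add: case_prod_beta)
  also have "\<dots> = (\<Prod>a\<in>{a\<in>{1..n}. P a}. \<Prod>c\<in>{..<k}. G a)"
    by (rule prod.cartesian_product[symmetric])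
  finally show ?thesis by simp
qed

lemma G_Eb: "d > 0 \<Longrightarrow> G d = inverse (Eb d)"
proof -
  assume d: "d > 0"
  have "Eb d * G d = 1"
  proof (rule fps_ext)
    fix i
    have "(Eb d * G d) $ i = G d $ i + (fps_X ^ d * G d) $ i"
      by (simp add: Eb_def algebra_simps)
    also have "\<dots> = (1::bit fps) $ i"
    proof (cases "i < d")
      case True
      then show ?thesis using d by (auto simp: fps_X_power_mult_nth G_nth dvd_imp_le)
    next
      case False
      then have "d dvd i \<longleftrightarrow> d dvd (i - d)" by (simp add: dvd_minus_self)
      then show ?thesis using False d by (auto simp: fps_X_power_mult_nth G_nth)
    qed
    finally show "(Eb d * G d) $ i = (1::bit fps) $ i" .
  qed
  then show ?thesis by (simp add: fps_inverse_unique)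
qed

lemma trunc_prod:
  assumes "n \<le> L"
  shows "eqm (Suc n) (\<Prod>a\<in>{a\<in>{1..n}. P a}. G a ^ k :: bit fps) (\<Prod>a\<in>{a\<in>{1..L}. P a}. G a ^ k)"
proof -
  have split: "{a\<in>{1..L}. P a} = {a\<in>{1..n}. P a} \<union> {a\<in>{Suc n..L}. P a}" using assms by auto
  have "(\<Prod>a\<in>{a\<in>{1..L}. P a}. G a ^ k :: bit fps) =
        (\<Prod>a\<in>{a\<in>{1..n}. P a}. G a ^ k) * (\<Prod>a\<in>{a\<in>{Suc n..L}. P a}. G a ^ k)"
    unfolding split by (rule prod.union_disjoint) auto
  moreover have "eqm (Suc n) (\<Prod>a\<in>{a\<in>{Suc n..L}. P a}. G a ^ k :: bit fps) (\<Prod>a\<in>{a\<in>{Suc n..L}. P a}. 1)"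
  proof (rule eqm_prod)
    fix a assume a: "a \<in> {a\<in>{Suc n..L}. P a}"
    have "eqm (Suc n) (G a :: bit fps) 1"
      unfolding eqm_def using a by (auto simp: G_nth dest: dvd_imp_le)
    then show "eqm (Suc n) (G a ^ k :: bit fps) 1" using eqm_power[of "Suc n" "G a" 1 k] by simp
  qed simp
  ultimately show ?thesis
    using eqm_mult[OF eqm_refl[of "Suc n" "(\<Prod>a\<in>{a\<in>{1..n}. P a}. G a ^ k :: bit fps)"],
      of "\<Prod>a\<in>{a\<in>{Suc n..L}. P a}. G a ^ k" 1]
    by (simp add: eqm_sym)
qed

lemma count_L:
  assumes "n \<le> L"
  shows "(of_nat (card (colored_partitions k P n)) :: bit) =
         inverse (\<Prod>a\<in>{a\<in>{1..L}. P a}. Eb a) ^ k $ n"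
proof -
  have "(of_nat (card (colored_partitions k P n)) :: bit) = (\<Prod>a\<in>{a\<in>{1..L}. P a}. G a ^ k :: bit fps) $ n"
  proof -
    have "eqm (Suc n) (\<Prod>a\<in>{a\<in>{1..n}. P a}. G a ^ k :: bit fps) (\<Prod>a\<in>{a\<in>{1..L}. P a}. G a ^ k)"
      by (rule trunc_prod[OF assms])
    then have "(\<Prod>a\<in>{a\<in>{1..n}. P a}. G a ^ k :: bit fps) $ n = (\<Prod>a\<in>{a\<in>{1..L}. P a}. G a ^ k) $ n"
      unfolding eqm_def using lessI by blast
    moreover have "(of_nat (card (colored_partitions k P n)) :: bit) =
        (\<Prod>a\<in>{a\<in>{1..n}. P a}. G a ^ k :: bit fps) $ n" by (rule card_cp)
    ultimately show ?thesis by simp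
  qed
  also have "(\<Prod>a\<in>{a\<in>{1..L}. P a}. G a ^ k :: bit fps) = (\<Prod>a\<in>{a\<in>{1..L}. P a}. inverse (Eb a)) ^ k"
    by (simp add: prod_power_distrib G_Eb)
  also have "\<dots> = inverse (\<Prod>a\<in>{a\<in>{1..L}. P a}. Eb a) ^ k"
    by (simp add: inverse_prod_fps)
  finally show ?thesis .
qed

lemma of_nat_bit_cong: "(of_nat a :: bit) = of_nat b \<Longrightarrow> [a = b] (mod 2)"
proof -
  have ev: "(of_nat m :: bit) = (if even m then 0 else 1)" for m
    by (induction m) auto
  assume "(of_nat a :: bit) = of_nat b"
  then have "even a = even b" unfolding ev by (auto split: if_splits)
  then show ?thesis unfolding cong_def by (metis odd_iff_mod_2_eq_one even_iff_mod_2_eq_zero)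
qed


lemma Xr0: "r > 0 \<Longrightarrow> ((fps_X::'a::idom fps) ^ r) $ 0 = 0" by simp

lemma eqm_dil:
  assumes "r > 0" "eqm N f g"
  shows "eqm (r*N) (dil r f) (dil r (g::'a::idom fps))"
  unfolding eqm_def
proof (intro allI impI)
  fix i assume "i < r*N"
  then have "r dvd i \<Longrightarrow> i div r < N" using assms(1)
    by (metis div_less_iff_less_mult mult.commute)
  then show "dil r f $ i = dil r g $ i" using assms by (auto simp: dil_nth eqm_def)
qed

lemma dil_mult: "r > 0 \<Longrightarrow> dil r (f * g) = dil r f * dil r (g::'a::idom fps)"
  unfolding dil_def by (rule fps_compose_mult_distrib) simp

lemma dil_add: "dil r (f + g) = dil r f + dil r (g::'a::idom fps)"
  unfolding dil_def by (rule fps_compose_add_distrib)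

lemma dil_power: "r > 0 \<Longrightarrow> dil r (f ^ k) = dil r (f::'a::idom fps) ^ k"
  unfolding dil_def by (rule fps_compose_power[symmetric]) simp

lemma dil_prod: "r > 0 \<Longrightarrow> dil r (prod f S) = (\<Prod>x\<in>S. dil r (f x :: 'a::idom fps))"
  unfolding dil_def by (rule fps_compose_prod_distrib) simp

lemma dil_inverse: "r > 0 \<Longrightarrow> f $ 0 \<noteq> 0 \<Longrightarrow> dil r (inverse f) = inverse (dil r (f::'a::field fps))"
  unfolding dil_def by (rule fps_inverse_compose) simp_all

lemma dil_dil: "r > 0 \<Longrightarrow> s > 0 \<Longrightarrow> dil r (dil s f) = dil (s*r) (f::'a::idom fps)"
proof -
  assume r: "r > 0" and s: "s > 0"
  have "dil r (dil s f) = f oo (fps_X ^ s oo fps_X ^ r)"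
    unfolding dil_def by (rule fps_compose_assoc[symmetric]) (use r s in simp_all)
  also have "fps_X ^ s oo fps_X ^ r = ((fps_X::'a fps) ^ r) ^ s"
    by (rule fps_X_power_compose) (use r in simp)
  finally show ?thesis by (simp add: dil_def power_mult[symmetric] mult.commute)
qed

lemma dil_Eb: "r > 0 \<Longrightarrow> dil r (Eb a) = Eb (r*a)"
proof -
  assume r: "r > 0"
  have "dil r (Eb a) = 1 + (fps_X ^ a oo fps_X ^ r)"
    by (simp add: dil_def Eb_def fps_compose_add_distrib)
  also have "fps_X ^ a oo fps_X ^ r = ((fps_X::bit fps) ^ r) ^ a"
    by (rule fps_X_power_compose) (use r in simp)
  finally show ?thesis by (simp add: Eb_def power_mult)
qed

lemma dil_Fm: "r > 0 \<Longrightarrow> dil r (Fm m) = (\<Prod>j\<in>{1..m}. Eb (r*j))"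
  by (simp add: Fm_def dil_prod dil_Eb)

lemma Fm_sq: "Fm m ^ 2 = dil 2 (Fm m)"
proof -
  have "dil 2 (Fm m) = (\<Prod>j\<in>{1..m}. Eb (2*j))" by (rule dil_Fm) simp
  then show ?thesis by (simp add: Fm_def prod_power_distrib Eb_sq)
qed

lemma Fm_pow4': "Fm m ^ 4 = dil 4 (Fm m)"
  by (simp add: dil_Fm Fm_pow4 qpoch_bit)

lemma dil_nth0: "r > 0 \<Longrightarrow> dil r f $ 0 = (f $ 0 :: 'a::idom)"
  by (simp add: dil_nth)

lemma Dr:
  assumes r: "r > 0"
  shows "eqm (Suc L) (\<Prod>a\<in>{a\<in>{1..L}. r dvd a}. Eb a) (dil r (Fm L))"
proof -
  have set: "{a\<in>{1..L}. r dvd a} = (\<lambda>j. r*j) ` {1..L div r}"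
  proof (intro equalityI subsetI)
    fix a assume "a \<in> {a\<in>{1..L}. r dvd a}"
    then obtain j where a: "a = r*j" "1 \<le> a" "a \<le> L" by auto
    then have "1 \<le> j" "j \<le> L div r" using r by (auto simp: less_eq_div_iff_mult_less_eq mult.commute)
    then show "a \<in> (\<lambda>j. r*j) ` {1..L div r}" using a by auto
  next
    fix a assume "a \<in> (\<lambda>j. r*j) ` {1..L div r}"
    then obtain j where j: "j \<in> {1..L div r}" and a0: "a = r*j" by blast
    then have a: "a = r*j" "1 \<le> j" "j \<le> L div r" by auto
    then have "r*j \<le> L" using r by (simp add: less_eq_div_iff_mult_less_eq mult.commute)
    moreover have "1 \<le> r*j" using a r by simp
    ultimately show "a \<in> {a\<in>{1..L}. r dvd a}" using a by auto
  qed
  have "(\<Prod>a\<in>{a\<in>{1..L}. r dvd a}. Eb a) = (\<Prod>j\<in>{1..L div r}. Eb (r*j))"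
    unfolding set by (rule prod.reindex_cong[of "\<lambda>j. r*j"]) (use r in \<open>auto simp: inj_on_def\<close>)
  also have "\<dots> = dil r (Fm (L div r))" by (simp add: dil_Fm r)
  finally have e: "(\<Prod>a\<in>{a\<in>{1..L}. r dvd a}. Eb a) = dil r (Fm (L div r))" .
  have "eqm (r * Suc (L div r)) (dil r (Fm (L div r))) (dil r (Fm L))"
    by (rule eqm_dil[OF r eqm_Fm]) simp
  moreover have "Suc L \<le> r * Suc (L div r)"
    using r by (metis Suc_leI dividend_less_times_div mult.commute mult_Suc_right add.commute)
  ultimately show ?thesis unfolding e by (rule eqm_mono)
qed

lemma inverse_power_fps: "inverse (f ^ k) = inverse (f::'a::field fps) ^ k"
  by (induction k) (auto simp: fps_inverse_mult)

lemma eqm_solve: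
  fixes a x y :: "'a::field fps"
  assumes "eqm N (a * x) y" "a $ 0 \<noteq> 0" "x $ 0 \<noteq> 0"
  shows "eqm N (inverse a) (x * inverse y)"
proof -
  have ax: "(a * x) $ 0 \<noteq> 0" using assms by simp
  have "inverse a = x * inverse (a * x)"
    using assms(3) by (simp add: fps_inverse_mult inverse_mult_eq_1' algebra_simps)
  also have "eqm N \<dots> (x * inverse y)"
    by (rule eqm_mult[OF eqm_refl eqm_inverse[OF assms(1) ax]])
  finally show ?thesis .
qed


lemmas [trans] = eqm_trans

lemma prod_nth0_1: "(\<And>x. x \<in> S \<Longrightarrow> f x $ 0 = 1) \<Longrightarrow> prod f S $ 0 = (1::'a::comm_ring_1)"
proof (induction S rule: infinite_finite_induct)
  case (insert x F) then show ?case by simp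
qed auto

lemma Eb_nth0: "a > 0 \<Longrightarrow> Eb a $ 0 = 1" by (simp add: Eb_def)

lemma prodEb_nth0: "(\<Prod>a\<in>{a\<in>{1..L}. P a}. Eb a) $ 0 = 1"
  by (rule prod_nth0_1) (auto simp: Eb_nth0)

definition PA :: "nat \<Rightarrow> bit fps" where
  "PA L = (\<Prod>a\<in>{a\<in>{1..L}. \<not> 3 dvd a \<and> \<not> 4 dvd a}. Eb a)"
definition PQ :: "nat \<Rightarrow> bit fps" where
  "PQ L = (\<Prod>a\<in>{a\<in>{1..L}. \<not> 3 dvd a}. Eb a)"
definition UU :: "nat \<Rightarrow> bit fps" where
  "UU L = inverse (Fm L) ^ 2"
definition VV :: "nat \<Rightarrow> bit fps" where
  "VV L = dil 3 (Fm L) ^ 3 * inverse (Fm L) ^ 3"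

lemma F3_nth0: "dil 3 (Fm L) $ 0 = 1" by (simp add: dil_nth0 Fm_nth0)

lemma PA_eq: "eqm (Suc L) (PA L * (dil 3 (Fm L) * Fm L ^ 4)) (Fm L * dil 3 (Fm L) ^ 4)"
proof -
  let ?S = "{1..L}"
  let ?D = "\<lambda>k. {a\<in>?S. k dvd a}"
  let ?A = "{a\<in>?S. \<not> 3 dvd a \<and> \<not> 4 dvd a}"
  let ?B = "{a\<in>?S. 3 dvd a \<or> 4 dvd a}"
  have s1: "?S = ?A \<union> ?B" by auto
  have f1: "Fm L = PA L * (\<Prod>a\<in>?B. Eb a)"
    unfolding Fm_def PA_def by (subst s1, rule prod.union_disjoint) auto
  have s2: "?B = ?D 3 \<union> ?D 4" by auto
  have s3: "?D 3 \<inter> ?D 4 = ?D 12" by (auto; presburger)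
  have f2: "(\<Prod>a\<in>?B. Eb a) * (\<Prod>a\<in>?D 12. Eb a) = (\<Prod>a\<in>?D 3. Eb a) * (\<Prod>a\<in>?D 4. Eb a)"
    unfolding s2 s3[symmetric] by (rule prod.union_inter) auto
  have ex: "Fm L * (\<Prod>a\<in>?D 12. Eb a) = PA L * ((\<Prod>a\<in>?D 3. Eb a) * (\<Prod>a\<in>?D 4. Eb a))"
    by (simp only: f1 mult.assoc f2)
  have d3: "eqm (Suc L) (\<Prod>a\<in>?D 3. Eb a) (dil 3 (Fm L))" by (rule Dr) simp
  have d4: "eqm (Suc L) (\<Prod>a\<in>?D 4. Eb a) (Fm L ^ 4)" using Dr[of 4 L] by (simp add: Fm_pow4')
  have d12: "eqm (Suc L) (\<Prod>a\<in>?D 12. Eb a) (dil 3 (Fm L) ^ 4)"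
  proof -
    have "dil 12 (Fm L) = dil 3 (dil 4 (Fm L))" by (simp add: dil_dil)
    also have "\<dots> = dil 3 (Fm L) ^ 4" by (simp add: Fm_pow4'[symmetric] dil_power)
    finally show ?thesis using Dr[of 12 L] by simp
  qed
  have "eqm (Suc L) (Fm L * (\<Prod>a\<in>?D 12. Eb a)) (Fm L * dil 3 (Fm L) ^ 4)"
    by (rule eqm_mult[OF eqm_refl d12])
  moreover have "eqm (Suc L) (PA L * ((\<Prod>a\<in>?D 3. Eb a) * (\<Prod>a\<in>?D 4. Eb a)))
                  (PA L * (dil 3 (Fm L) * Fm L ^ 4))"
    by (rule eqm_mult[OF eqm_refl eqm_mult[OF d3 d4]])
  ultimately show ?thesis unfolding ex by (blast intro: eqm_trans eqm_sym)
qed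

lemma unit_alg:
  fixes u v :: "'a::field fps"
  assumes "u $ 0 \<noteq> 0" "v $ 0 \<noteq> 0"
  shows "(v * u ^ 4) * inverse (u * v ^ 4) = u ^ 3 * inverse v ^ 3"
proof -
  have uu: "u * inverse u = 1" and vv: "v * inverse v = 1"
    using assms by (simp_all add: inverse_mult_eq_1')
  have "(v * u ^ 4) * inverse (u * v ^ 4) = (u ^ 3 * inverse v ^ 3) * (u * inverse u) * (v * inverse v)"
    by (simp add: fps_inverse_mult inverse_power_fps eval_nat_numeral algebra_simps)
  then show ?thesis by (simp add: uu vv)
qed

lemma C_main: "eqm (Suc L) (inverse (PA L)) (dil 3 (UU L) + fps_X * dil 3 (VV L))"
proof -
  let ?F = "Fm L" and ?F3 = "dil 3 (Fm L)"
  have PA0: "PA L $ 0 = 1" unfolding PA_def by (rule prodEb_nth0)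
  have x0: "(?F3 * ?F ^ 4) $ 0 \<noteq> 0" by (simp add: F3_nth0 Fm_nth0)
  have "eqm (Suc L) (inverse (PA L)) ((?F3 * ?F ^ 4) * inverse (?F * ?F3 ^ 4))"
    by (rule eqm_solve[OF PA_eq]) (use PA0 x0 in simp_all)
  also have "(?F3 * ?F ^ 4) * inverse (?F * ?F3 ^ 4) = ?F ^ 3 * inverse ?F3 ^ 3"
    by (rule unit_alg) (simp_all add: F3_nth0 Fm_nth0)
  also have "eqm (Suc L) (?F ^ 3 * inverse ?F3 ^ 3) (Ps * inverse ?F3 ^ 3)"
    by (rule eqm_mult[OF JACOBI eqm_refl])
  also have "Ps * inverse ?F3 ^ 3 = (dil 3 Pe + fps_X * dil 9 Ps) * inverse ?F3 ^ 3"
    by (subst DISS) simp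
  also have "eqm (Suc L) \<dots> ((?F3 + fps_X * dil 9 (?F ^ 3)) * inverse ?F3 ^ 3)"
  proof (rule eqm_mult[OF _ eqm_refl], rule eqm_add)
    show "eqm (Suc L) (dil 3 Pe) ?F3"
      using eqm_dil[of 3 "Suc L" Pe "Fm L", OF _ eqm_sym[OF EULER]] by (auto intro: eqm_mono)
    have "eqm (9 * Suc L) (dil 9 Ps) (dil 9 (?F ^ 3))"
      by (rule eqm_dil[OF _ eqm_sym[OF JACOBI]]) simp
    then show "eqm (Suc L) (fps_X * dil 9 Ps) (fps_X * dil 9 (?F ^ 3))"
      by (intro eqm_mult eqm_refl) (auto intro: eqm_mono)
  qed
  also have "(?F3 + fps_X * dil 9 (?F ^ 3)) * inverse ?F3 ^ 3 = dil 3 (UU L) + fps_X * dil 3 (VV L)"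
  proof -
    have a: "dil 9 (?F ^ 3) = dil 3 (?F3 ^ 3)" by (simp add: dil_dil dil_power)
    have b: "dil 3 (VV L) = dil 3 (?F3 ^ 3) * inverse ?F3 ^ 3"
      by (simp add: VV_def dil_mult dil_power dil_inverse Fm_nth0)
    have c: "dil 3 (UU L) = inverse ?F3 ^ 2"
      by (simp add: UU_def dil_power dil_inverse Fm_nth0)
    have d: "?F3 * inverse ?F3 ^ 3 = inverse ?F3 ^ 2"
    proof -
      have "?F3 * inverse ?F3 = 1" by (simp add: inverse_mult_eq_1' F3_nth0)
      then show ?thesis by (simp add: eval_nat_numeral)
    qed
    show ?thesis unfolding a b c by (simp add: distrib_right d algebra_simps)
  qed
  finally show ?thesis .
qed

lemma Cf_nth:
  fixes U V :: "bit fps"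
  shows "(dil 3 U + fps_X * dil 3 V) $ (3*m + 2) = 0"
    and "(dil 3 U + fps_X * dil 3 V) $ (3*m + 1) = V $ m"
    and "(dil 3 U + fps_X * dil 3 V) $ (3*m) = U $ m"
proof -
  show "(dil 3 U + fps_X * dil 3 V) $ (3*m + 2) = 0"
  proof -
    have "\<not> 3 dvd (3*m+2)" "\<not> 3 dvd (3*m+1)" by presburger+
    then show ?thesis by (simp add: dil_nth)
  qed
  show "(dil 3 U + fps_X * dil 3 V) $ (3*m + 1) = V $ m"
  proof -
    have "\<not> 3 dvd (3*m+1)" by presburger
    then show ?thesis by (simp add: dil_nth)
  qed
  show "(dil 3 U + fps_X * dil 3 V) $ (3*m) = U $ m"
  proof -
    have "m \<noteq> 0 \<Longrightarrow> \<not> 3 dvd (3*m - 1)" by presburger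
    then show ?thesis by (simp add: dil_nth)
  qed
qed


lemma PA_sq: "PA L ^ 2 = dil 2 (PA L)"
  by (simp add: PA_def prod_power_distrib Eb_sq dil_prod dil_Eb)

lemma PA_nth0: "PA L $ 0 = 1" unfolding PA_def by (rule prodEb_nth0)
lemma PQ_nth0: "PQ L $ 0 = 1" unfolding PQ_def by (rule prodEb_nth0)

lemma b2_coef:
  assumes "2*m \<le> L"
  shows "(of_nat (b2_34 (2*m)) :: bit) = inverse (PA L) $ m"
proof -
  have "(of_nat (b2_34 (2*m)) :: bit) = inverse (PA L) ^ 2 $ (2*m)"
    unfolding b2_34_def PA_def by (rule count_L[OF assms])
  also have "inverse (PA L) ^ 2 = dil 2 (inverse (PA L))"
    by (simp add: inverse_power_fps[symmetric] PA_sq dil_inverse PA_nth0)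
  finally show ?thesis by (simp add: dil_nth)
qed

lemma b2_Cf:
  assumes "2*m \<le> L"
  shows "(of_nat (b2_34 (2*m)) :: bit) = (dil 3 (UU L) + fps_X * dil 3 (VV L)) $ m"
  using b2_coef[OF assms] C_main[of L] assms unfolding eqm_def by simp

lemma b3_coef:
  assumes "n \<le> L"
  shows "(of_nat (b3_3 n) :: bit) = VV L $ n"
proof -
  have "(of_nat (b3_3 n) :: bit) = inverse (PQ L) ^ 3 $ n"
    unfolding b3_3_def PQ_def by (rule count_L[OF assms])
  moreover have "eqm (Suc L) (inverse (PQ L) ^ 3) (VV L)"
  proof -
    let ?D3 = "{a\<in>{1..L}. 3 dvd a}"
    have s: "{1..L} = {a\<in>{1..L}. \<not> 3 dvd a} \<union> ?D3" by auto
    have ex: "Fm L = PQ L * (\<Prod>a\<in>?D3. Eb a)"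
      unfolding Fm_def PQ_def by (subst s, rule prod.union_disjoint) auto
    have "eqm (Suc L) (PQ L * (\<Prod>a\<in>?D3. Eb a)) (PQ L * dil 3 (Fm L))"
      by (rule eqm_mult[OF eqm_refl Dr]) simp
    then have "eqm (Suc L) (PQ L * dil 3 (Fm L)) (Fm L)" unfolding ex[symmetric] by (rule eqm_sym)
    then have "eqm (Suc L) (inverse (PQ L)) (dil 3 (Fm L) * inverse (Fm L))"
      by (rule eqm_solve) (simp_all add: PQ_nth0 F3_nth0)
    then have "eqm (Suc L) (inverse (PQ L) ^ 3) ((dil 3 (Fm L) * inverse (Fm L)) ^ 3)"
      by (rule eqm_power)
    then show ?thesis by (simp add: VV_def power_mult_distrib)
  qed
  ultimately show ?thesis using assms unfolding eqm_def by simp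
qed

lemma UU_dil: "UU L = dil 2 (inverse (Fm L))"
  by (simp add: UU_def inverse_power_fps[symmetric] Fm_sq dil_inverse Fm_nth0)

lemma pc_coef:
  assumes "n \<le> L"
  shows "(of_nat (part_count n) :: bit) = inverse (Fm L) $ n"
proof -
  have "(of_nat (part_count n) :: bit) = inverse (\<Prod>a\<in>{a\<in>{1..L}. True}. Eb a) ^ 1 $ n"
    unfolding part_count_def by (rule count_L[OF assms])
  moreover have "{a\<in>{1..L}. True} = {1..L}" by auto
  ultimately show ?thesis unfolding Fm_def by simp
qed

theorem mainTheorem5:
  fixes n :: nat
  assumes "n \<ge> 1"
  shows "[b2_34 (6*n+4) = 0] (mod 2) \<and>
         [b2_34 (6*n+2) = b3_3 n] (mod 2) \<and>
         [b2_34 (12*n+6) = 0] (mod 2) \<and>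
         [b2_34 (12*n) = part_count n] (mod 2)"
proof -
  define L where "L = 12*n + 6"
  let ?C = "dil 3 (UU L) + fps_X * dil 3 (VV L)"
  have i: "(of_nat (b2_34 (6*n+4)) :: bit) = of_nat 0"
  proof -
    have "(of_nat (b2_34 (2*(3*n+2))) :: bit) = ?C $ (3*n+2)"
      by (rule b2_Cf) (simp add: L_def)
    also have "\<dots> = 0" by (rule Cf_nth(1))
    finally have A: "(of_nat (b2_34 (2*(3*n+2))) :: bit) = 0" .
    have e: "6*n+4 = 2*(3*n+2)" by simp
    show ?thesis using A by (simp only: e of_nat_0)
  qed
  have ii: "(of_nat (b2_34 (6*n+2)) :: bit) = of_nat (b3_3 n)"
  proof -
    have "(of_nat (b2_34 (2*(3*n+1))) :: bit) = ?C $ (3*n+1)"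
      by (rule b2_Cf) (simp add: L_def)
    also have "\<dots> = VV L $ n" by (rule Cf_nth(2))
    also have "\<dots> = of_nat (b3_3 n)" by (rule b3_coef[symmetric]) (simp add: L_def)
    finally show ?thesis by simp
  qed
  have iii: "(of_nat (b2_34 (12*n+6)) :: bit) = of_nat 0"
  proof -
    have "(of_nat (b2_34 (2*(3*(2*n+1)))) :: bit) = ?C $ (3*(2*n+1))"
      by (rule b2_Cf) (simp add: L_def)
    also have "\<dots> = UU L $ (2*n+1)" by (rule Cf_nth(3))
    also have "\<dots> = 0" unfolding UU_dil by (simp add: dil_nth)
    finally have A: "(of_nat (b2_34 (2*(3*(2*n+1)))) :: bit) = 0" .
    have e: "12*n+6 = 2*(3*(2*n+1))" by simp
    show ?thesis using A by (simp only: e of_nat_0)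
  qed
  have iv: "(of_nat (b2_34 (12*n)) :: bit) = of_nat (part_count n)"
  proof -
    have "(of_nat (b2_34 (2*(3*(2*n)))) :: bit) = ?C $ (3*(2*n))"
      by (rule b2_Cf) (simp add: L_def)
    also have "\<dots> = UU L $ (2*n)" by (rule Cf_nth(3))
    also have "\<dots> = inverse (Fm L) $ n" unfolding UU_dil by (simp add: dil_nth)
    also have "\<dots> = of_nat (part_count n)" by (rule pc_coef[symmetric]) (simp add: L_def)
    finally show ?thesis by simp
  qed
  show ?thesis using of_nat_bit_cong[OF i] of_nat_bit_cong[OF ii]
      of_nat_bit_cong[OF iii] of_nat_bit_cong[OF iv] by simp
qed


end
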